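(* Under Assumptions 1, 2 and 3, let $\lambda_1>0$ be arbitrary and $\lambda_2=19\sqrt{\nu_n\rho_n n}$, and let $(\hat S,\hat L)$ and $\hat{\mathcal O}$ be as in the context. Then there is an absolute constant $c>0$ such that, with probability at least $1-c/n$, $\hat{\mathcal O}\cap\mathcal I=\emptyset$.
   Context: Let $n\ge2$ and let $[n]=\mathcal I\sqcup\mathcal O$ be a partition into inliers $\mathcal I$ and outliers $\mathcal O$, $s=|\mathcal O|$. Write $I=\mathcal I\times\mathcal I$ and $O=([n]\times[n])\setminus I$. For $M\in\mathbb R^{n\times n}$ and $\mathcal S\subset[n]\times[n]$, $M_{|\mathcal S}=\mathbb 1_{\mathcal S}\odot M$ ($\odot$ entrywise product, $\mathbb 1_{\mathcal S}$ indicator matrix); $(\cdot)_+$ is the entrywise positive part; $M_{\cdot,j}$, $M_{j,\cdot}$ denote the $j$-th column and row. Let $\rho_n\in(0,1/2]$, $\gamma_n\in(0,1]$, $k\ge1$. $L^*$ is a symmetric $n\times n$ matrix of rank $k$ with entries in $[0,\rho_n]$ and $L^*_{ij}=0$ whenever $i\in\mathcal O$ or $j\in\mathcal O$. $S^*$ is an $n\times n$ matrix with entries in $[0,\gamma_n]$, zero diagonal, $S^*_{\cdot,j}=0$ for all $j\in\mathcal I$, and $L^*+S^*+(S^* )^\top$ has entries in $[0,1]$. The adjacency matrix $A$ is symmetric with zero diagonal and $(A_{ij})_{i<j}$ are independent, $A_{ij}\sim\mathrm{Bernoulli}((L^*+S^*+(S^* )^\top)_{ij})$. The sampling matrix $\Omega$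 is symmetric with zero diagonal, $(\Omega_{ij})_{i<j}$ are independent $\mathrm{Bernoulli}(\Pi_{ij})$, $\Omega$ independent of $A$, $\Pi=\mathbb E[\Omega]$. $\Sigma=A-\mathbb E[A]$. Norms: $\|M\|_{L_2(\Pi)}^2=\sum_{i,j}\Pi_{ij}M_{ij}^2$, $\|M\|_{2,1}=\sum_j(\sum_iM_{ij}^2)^{1/2}$, $\|M\|_{2,\infty}=\max_j(\sum_iM_{ij}^2)^{1/2}$, $\|\cdot\|_F$ Frobenius, $\|\cdot\|_*$ nuclear, $\|\cdot\|_{op}$ operator norm, $\|M\|_\infty=\max_{ij}|M_{ij}|$. Assumption 1: there is $\mu_n>0$ with $\Pi_{ij}\ge\mu_n$ for all $(i,j)\in I$, $i\neq j$; and $\nu_n,\tilde\nu_n\in(0,1]$ satisfy $\sum_{j\in\mathcal I}\Pi_{ij}\le\nu_n n$ for all $i\in\mathcal I$ and $\sum_{j\in\mathcal O}\Pi_{ij}\le\tilde\nu_n s$ for all $i\in[n]$. Assumption 2: $\nu_n\rho_n\ge\log(n)/n$ and $\tilde\nu_n\gamma_n\ge\log(n)/n$. Assumption 3: $\nu_n\rho_n n\ge\tilde\nu_n\gamma_n s$. Estimator: for $\lambda_1,\lambda_2>0$, $\mathcal F(S,L)=\frac12\|\Omega\odot(A-L-S-S^\top)\|_F^2+\lambda_1\|L\|_*+\lambda_2\|S\|_{2,1}$; $(\hat S,\hat L)$ is any minimizer of $\mathcal F$ over $S\in[0,1]^{n\times n}$ and symmetric $L\in[0,\rho_n]^{n\times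 n}$, and (standing assumption that the upper box constraint on $S$ is inactive) $\hat S$ also minimizes $S\mapsto\mathcal F(S,\hat L)$ over nonnegative $S\in\mathbb R_+^{n\times n}$. The detected outliers are $\hat{\mathcal O}=\{j\in[n]:\hat S_{\cdot,j}\ne0\}$. *)

theory Defs
  imports "HOL-Probability.Probability" "Jordan_Normal_Form.DL_Rank"
begin

text \<open>Matrices on [n] are represented as functions nat => nat => real; only the
  entries with indices below n are meaningful. Index set [n] = {..<n}.\<close>

definition mrank :: "nat \<Rightarrow> (nat \<Rightarrow> nat \<Rightarrow> real) \<Rightarrow> nat" where
  "mrank n M = vec_space.rank n (mat n n (\<lambda>(i,j). M i j) :: real mat)"

definition opnorm :: "nat \<Rightarrow> (nat \<Rightarrow> nat \<Rightarrow> real) \<Rightarrow> real" where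
  "opnorm n M = Sup {sqrt (\<Sum>i<n. (\<Sum>j<n. M i j * v j)^2) | v :: nat \<Rightarrow> real.
                       (\<Sum>j<n. (v j)^2) \<le> 1}"

text \<open>Nuclear norm, as the dual norm of the operator norm (= sum of singular values).\<close>
definition nucnorm :: "nat \<Rightarrow> (nat \<Rightarrow> nat \<Rightarrow> real) \<Rightarrow> real" where
  "nucnorm n M = Sup {(\<Sum>i<n. \<Sum>j<n. M i j * X i j) | X. opnorm n X \<le> 1}"

definition norm21 :: "nat \<Rightarrow> (nat \<Rightarrow> nat \<Rightarrow> real) \<Rightarrow> real" where
  "norm21 n M = (\<Sum>j<n. sqrt (\<Sum>i<n. (M i j)^2))"

definition objF :: "nat \<Rightarrow> (nat \<Rightarrow> nat \<Rightarrow> real) \<Rightarrow> (nat \<Rightarrow> nat \<Rightarrow> real) \<Rightarrow> real \<Rightarrow> real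
     \<Rightarrow> (nat \<Rightarrow> nat \<Rightarrow> real) \<Rightarrow> (nat \<Rightarrow> nat \<Rightarrow> real) \<Rightarrow> real" where
  "objF n Om A lam1 lam2 S L =
     (1/2) * (\<Sum>i<n. \<Sum>j<n. (Om i j * (A i j - L i j - S i j - S j i))^2)
     + lam1 * nucnorm n L + lam2 * norm21 n S"

text \<open>(Shat, Lhat) is a minimizer of F over S in [0,1]^{n x n} and symmetric L in [0,rho]^{n x n},
  and (standing assumption) Shat also minimizes S |-> F(S,Lhat) over nonnegative S.\<close>
definition is_estimator :: "nat \<Rightarrow> real \<Rightarrow> (nat \<Rightarrow> nat \<Rightarrow> real) \<Rightarrow> (nat \<Rightarrow> nat \<Rightarrow> real) \<Rightarrow> real \<Rightarrow> real
     \<Rightarrow> (nat \<Rightarrow> nat \<Rightarrow> real) \<Rightarrow> (nat \<Rightarrow> nat \<Rightarrow> real) \<Rightarrow> bool" where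
  "is_estimator n rho Om A lam1 lam2 Sh Lh \<longleftrightarrow>
     (\<forall>i<n. \<forall>j<n. 0 \<le> Sh i j \<and> Sh i j \<le> 1) \<and>
     (\<forall>i<n. \<forall>j<n. Lh i j = Lh j i \<and> 0 \<le> Lh i j \<and> Lh i j \<le> rho) \<and>
     (\<forall>S L. (\<forall>i<n. \<forall>j<n. 0 \<le> S i j \<and> S i j \<le> 1) \<longrightarrow>
            (\<forall>i<n. \<forall>j<n. L i j = L j i \<and> 0 \<le> L i j \<and> L i j \<le> rho) \<longrightarrow>
            objF n Om A lam1 lam2 Sh Lh \<le> objF n Om A lam1 lam2 S L) \<and>
     (\<forall>S. (\<forall>i<n. \<forall>j<n. 0 \<le> S i j) \<longrightarrow>
            objF n Om A lam1 lam2 Sh Lh \<le> objF n Om A lam1 lam2 S Lh)"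

definition upper_pairs :: "nat \<Rightarrow> (nat \<times> nat) set" where
  "upper_pairs n = {(i,j). i < j \<and> j < n}"

text \<open>Joint law of the independent upper-triangular entries (A_ij, Omega_ij), i<j:
  A_ij ~ Bernoulli(P_ij), Omega_ij ~ Bernoulli(Pi_ij), all independent.\<close>
definition sample_pmf :: "nat \<Rightarrow> (nat \<Rightarrow> nat \<Rightarrow> real) \<Rightarrow> (nat \<Rightarrow> nat \<Rightarrow> real)
     \<Rightarrow> (nat \<times> nat \<Rightarrow> bool \<times> bool) pmf" where
  "sample_pmf n P Pimat = Pi_pmf (upper_pairs n) (False, False)
      (\<lambda>(i,j). pair_pmf (bernoulli_pmf (P i j)) (bernoulli_pmf (Pimat i j)))"

definition sym_of :: "(nat \<times> nat \<Rightarrow> bool) \<Rightarrow> nat \<Rightarrow> nat \<Rightarrow> real" where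
  "sym_of x i j = (if i < j then of_bool (x (i,j)) else if j < i then of_bool (x (j,i)) else 0)"

definition adjA :: "(nat \<times> nat \<Rightarrow> bool \<times> bool) \<Rightarrow> nat \<Rightarrow> nat \<Rightarrow> real" where
  "adjA w = sym_of (\<lambda>p. fst (w p))"

definition sampO :: "(nat \<times> nat \<Rightarrow> bool \<times> bool) \<Rightarrow> nat \<Rightarrow> nat \<Rightarrow> real" where
  "sampO w = sym_of (\<lambda>p. snd (w p))"

end

theory Submission
  imports Defs
begin


lemma det_col_zero:
  fixes n :: nat and Om A Sh Lh :: "nat \<Rightarrow> nat \<Rightarrow> real"
  assumes est: "is_estimator n rho Om A lam1 lam2 Sh Lh"
    and Om01: "\<forall>i<n. \<forall>j<n. Om i j \<in> {0,1}"
    and A01: "\<forall>i<n. \<forall>j<n. A i j \<in> {0,1}"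
    and Omsym: "\<forall>i<n. \<forall>j<n. Om i j = Om j i"
    and Asym: "\<forall>i<n. \<forall>j<n. A i j = A j i"
    and Omdiag: "\<forall>i<n. Om i i = 0"
    and j: "j < n"
    and lam2: "lam2 > 0"
    and deg: "4 * (\<Sum>i<n. Om i j * A i j) < lam2^2"
    and i0: "i0 < n"
  shows "Sh i0 j = 0"
proof (rule ccontr)
  assume ne: "Sh i0 j \<noteq> 0"
  have Shnn: "\<forall>i<n. \<forall>j<n. 0 \<le> Sh i j" and Lhp: "\<forall>i<n. \<forall>j<n. Lh i j = Lh j i \<and> 0 \<le> Lh i j"
    and minS: "\<forall>S. (\<forall>i<n. \<forall>j<n. 0 \<le> S i j) \<longrightarrow>
            objF n Om A lam1 lam2 Sh Lh \<le> objF n Om A lam1 lam2 S Lh"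
    using est unfolding is_estimator_def by auto
  define v where "v i = Sh i j" for i
  define R where "R a b = A a b - Lh a b - Sh a b - Sh b a" for a b
  define V where "V = sqrt (\<Sum>i<n. (v i)^2)"
  define K where "K = (\<Sum>i<n. Om i j * (v i)^2)"
  define d where "d = (\<Sum>i<n. Om i j * A i j)"
  define X where "X = (\<Sum>i<n. Om i j * v i * R i j)"
  have vpos: "v i0 > 0" using ne Shnn i0 j unfolding v_def by force
  have "(\<Sum>i<n. (v i)^2) > 0"
  proof -
    have "(v i0)^2 \<le> (\<Sum>i<n. (v i)^2)"
      using i0 by (intro member_le_sum) auto
    moreover have "(v i0)^2 > 0" using vpos by simp
    ultimately show ?thesis by linarith
  qed
  hence Vpos: "V > 0" unfolding V_def by simp
  have Omnn: "\<forall>i<n. \<forall>j<n. 0 \<le> Om i j" using Om01 by fastforce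
  have Ann: "\<forall>i<n. \<forall>j<n. 0 \<le> A i j" using A01 by fastforce
  have OmOm: "\<forall>i<n. \<forall>j<n. Om i j * Om i j = Om i j" using Om01 by fastforce
  have Knn: "K \<ge> 0" unfolding K_def using Omnn j by (intro sum_nonneg) auto
  have dnn: "d \<ge> 0" unfolding d_def using Omnn Ann j by (intro sum_nonneg) auto
  have X1: "X \<le> (\<Sum>i<n. (Om i j * A i j) * v i)"
    unfolding X_def
  proof (intro sum_mono)
    fix i assume i: "i \<in> {..<n}"
    have "0 \<le> Lh i j" "0 \<le> Sh i j" "0 \<le> Sh j i" using Shnn Lhp i j by auto
    hence "R i j \<le> A i j" unfolding R_def by linarith
    moreover have "Om i j * v i \<ge> 0" using Omnn Shnn i j unfolding v_def by simp
    ultimately show "Om i j * v i * R i j \<le> Om i j * A i j * v i"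
    proof -
      have "(Om i j * v i) * R i j \<le> (Om i j * v i) * A i j"
        by (rule mult_left_mono) fact+
      thus ?thesis by (simp add: ac_simps)
    qed
  qed
  have X2: "(\<Sum>i<n. (Om i j * A i j) * v i) \<le> sqrt d * V"
  proof -
    have "(\<Sum>i<n. (Om i j * A i j) * v i)^2 \<le> (\<Sum>i<n. (Om i j * A i j)^2) * (\<Sum>i<n. (v i)^2)"
      by (rule Cauchy_Schwarz_ineq_sum)
    also have "(\<Sum>i<n. (Om i j * A i j)^2) = d"
      unfolding d_def
    proof (intro sum.cong refl)
      fix x assume "x \<in> {..<n}"
      then have "Om x j \<in> {0,1}" "A x j \<in> {0,1}" using Om01 A01 j by auto
      thus "(Om x j * A x j)^2 = Om x j * A x j" by auto
    qed
    finally have "(\<Sum>i<n. (Om i j * A i j) * v i)^2 \<le> d * (\<Sum>i<n. (v i)^2)" .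
    hence "sqrt ((\<Sum>i<n. (Om i j * A i j) * v i)^2) \<le> sqrt (d * (\<Sum>i<n. (v i)^2))"
      by (rule real_sqrt_le_mono)
    hence "\<bar>\<Sum>i<n. (Om i j * A i j) * v i\<bar> \<le> sqrt d * V"
      unfolding V_def real_sqrt_abs real_sqrt_mult .
    thus ?thesis by linarith
  qed
  have sd: "2 * sqrt d < lam2"
  proof -
    have "(2 * sqrt d)^2 = 4 * d" using dnn by (simp add: power_mult_distrib)
    moreover have "4 * d < lam2^2" using deg by (simp only: d_def)
    ultimately have sq: "(2 * sqrt d)^2 < lam2^2" by simp
    show ?thesis by (rule power_less_imp_less_base[OF sq]) (use lam2 in simp)
  qed
  have gap: "2 * X < lam2 * V"
  proof -
    have "2 * X \<le> 2 * sqrt d * V" using X1 X2 by linarith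
    also have "\<dots> < lam2 * V" using sd Vpos by simp
    finally show ?thesis .
  qed
  define t where "t = min 1 ((lam2 * V - 2 * X) / (2 * (K + 1)))"
  have tpos: "t > 0" using gap Knn unfolding t_def by auto
  have tle: "t \<le> 1" unfolding t_def by auto
  have tK: "t * K < lam2 * V - 2 * X"
  proof -
    have "t \<le> (lam2 * V - 2 * X) / (2 * (K + 1))" unfolding t_def by auto
    hence "t * (2 * (K + 1)) \<le> lam2 * V - 2 * X" using Knn by (simp add: field_simps)
    moreover have "t * K < t * (2 * (K + 1))" using tpos Knn by (intro mult_strict_left_mono) auto
    ultimately show ?thesis by linarith
  qed
  define St where "St a b = (if b = j then (1 - t) * Sh a b else Sh a b)" for a b
  have Stnn: "\<forall>a<n. \<forall>b<n. 0 \<le> St a b" using Shnn tle unfolding St_def by auto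
  have "objF n Om A lam1 lam2 Sh Lh \<le> objF n Om A lam1 lam2 St Lh" using minS Stnn by blast
  define G where "G a = Om a j * (2 * t * v a * R a j + t^2 * (v a)^2)" for a
  have pw: "(Om a b * (A a b - Lh a b - St a b - St b a))^2 =
      (Om a b * (A a b - Lh a b - Sh a b - Sh b a))^2 + (if b = j then G a else 0) + (if a = j then G b else 0)"
    if a: "a < n" and b: "b < n" for a b
  proof (cases "b = j")
    case True
    show ?thesis
    proof (cases "a = j")
      case True
      with \<open>b = j\<close> show ?thesis using Omdiag j unfolding G_def by simp
    next
      case False
      have "A a b - Lh a b - St a b - St b a = R a j + t * v a"
        using False True unfolding St_def R_def v_def by (simp add: algebra_simps)
      note E = this
      have O2: "(Om a j)^2 = Om a j" using OmOm a j by (simp add: power2_eq_square)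
      have "(Om a b * (A a b - Lh a b - St a b - St b a))^2 = (Om a j)^2 * (R a j + t * v a)^2"
        using E True by (simp only: power_mult_distrib)
      also have "\<dots> = Om a j * (R a j)^2 + G a" unfolding O2 G_def by (simp add: power2_eq_square algebra_simps)
      also have "Om a j * (R a j)^2 = (Om a b * (A a b - Lh a b - Sh a b - Sh b a))^2"
        using O2 True unfolding R_def by (simp add: power_mult_distrib)
      finally show ?thesis using True False by simp
    qed
  next
    case False
    show ?thesis
    proof (cases "a = j")
      case True
      have "A a b - Lh a b - St a b - St b a = R b j + t * v b"
        using False True Asym Lhp a b unfolding St_def R_def v_def by (simp add: algebra_simps)
      note E = this
      have O2: "(Om b j)^2 = Om b j" using OmOm b j by (simp add: power2_eq_square)
      have Oab: "Om a b = Om b j" using Omsym True a b by auto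
      have Rs: "A a b - Lh a b - Sh a b - Sh b a = R b j"
        using True Asym Lhp a b unfolding R_def by auto
      have "(Om a b * (A a b - Lh a b - St a b - St b a))^2 = (Om b j)^2 * (R b j + t * v b)^2"
        using E Oab by (simp only: power_mult_distrib)
      also have "\<dots> = Om b j * (R b j)^2 + G b" unfolding O2 G_def by (simp add: power2_eq_square algebra_simps)
      also have "Om b j * (R b j)^2 = (Om a b * (A a b - Lh a b - Sh a b - Sh b a))^2"
        using O2 Oab Rs by (simp add: power_mult_distrib)
      finally show ?thesis using True \<open>b \<noteq> j\<close> by simp
    next
      case False
      with \<open>b \<noteq> j\<close> show ?thesis unfolding St_def by simp
    qed
  qed
  have sumG: "(\<Sum>a<n. G a) = 2 * t * X + t^2 * K"
  proof -
    have "G a = 2 * t * (Om a j * v a * R a j) + t^2 * (Om a j * (v a)^2)" for a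
      unfolding G_def by (simp add: algebra_simps)
    hence "(\<Sum>a<n. G a) = (\<Sum>a<n. 2 * t * (Om a j * v a * R a j) + t^2 * (Om a j * (v a)^2))" by simp
    also have "\<dots> = 2 * t * X + t^2 * K" unfolding X_def K_def by (simp add: sum.distrib sum_distrib_left)
    finally show ?thesis .
  qed
  have Q: "(\<Sum>a<n. \<Sum>b<n. (Om a b * (A a b - Lh a b - St a b - St b a))^2) =
        (\<Sum>a<n. \<Sum>b<n. (Om a b * (A a b - Lh a b - Sh a b - Sh b a))^2) + 2 * (\<Sum>a<n. G a)"
  proof -
    have "(\<Sum>a<n. \<Sum>b<n. (Om a b * (A a b - Lh a b - St a b - St b a))^2) =
        (\<Sum>a<n. \<Sum>b<n. (Om a b * (A a b - Lh a b - Sh a b - Sh b a))^2 + (if b = j then G a else 0) + (if a = j then G b else 0))"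
      using pw by simp
    also have "\<dots> = (\<Sum>a<n. \<Sum>b<n. (Om a b * (A a b - Lh a b - Sh a b - Sh b a))^2) + (\<Sum>a<n. G a) + (\<Sum>b<n. G b)"
    proof -
      have h: "(\<Sum>b<n. if a = j then G b else 0) = (if a = j then (\<Sum>b<n. G b) else 0)" for a by simp
      show ?thesis using j by (simp add: sum.distrib h)
    qed
    finally show ?thesis by simp
  qed
  have col: "sqrt (\<Sum>a<n. (St a b)^2) = sqrt (\<Sum>a<n. (Sh a b)^2) - (if b = j then t * V else 0)" for b
  proof (cases "b = j")
    case True
    have "(\<Sum>a<n. (St a b)^2) = (1-t)^2 * (\<Sum>a<n. (v a)^2)"
      using True unfolding St_def v_def by (simp add: sum_distrib_left power_mult_distrib)
    hence "sqrt (\<Sum>a<n. (St a b)^2) = (1 - t) * V" using tle unfolding V_def by (simp add: real_sqrt_mult)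
    thus ?thesis using True unfolding V_def v_def by (simp add: algebra_simps)
  qed (simp add: St_def)
  have N: "norm21 n St = norm21 n Sh - t * V"
    unfolding norm21_def col using j by (simp add: sum_subtractf sum.delta)
  have "objF n Om A lam1 lam2 St Lh = objF n Om A lam1 lam2 Sh Lh + t * (2 * X + t * K - lam2 * V)"
    unfolding objF_def Q N sumG by (simp add: algebra_simps power2_eq_square)
  moreover have "t * (2 * X + t * K - lam2 * V) < 0"
    using tpos tK by (simp add: mult_pos_neg)
  ultimately show False using \<open>objF n Om A lam1 lam2 Sh Lh \<le> objF n Om A lam1 lam2 St Lh\<close>
    by linarith
qed



lemma bern_exp:
  fixes a b :: real
  assumes "0 \<le> a" "a \<le> 1" "0 \<le> b" "b \<le> 1"
  shows "measure_pmf.expectation (pair_pmf (bernoulli_pmf a) (bernoulli_pmf b))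
           (\<lambda>x. exp (of_bool (fst x \<and> snd x))) = 1 + (exp 1 - 1) * a * b"
proof -
  have U: "(UNIV :: (bool \<times> bool) set) = {(True,True),(True,False),(False,True),(False,False)}"
    by auto
  have "measure_pmf.expectation (pair_pmf (bernoulli_pmf a) (bernoulli_pmf b))
           (\<lambda>x. exp (of_bool (fst x \<and> snd x))) =
        (\<Sum>x\<in>UNIV. pmf (pair_pmf (bernoulli_pmf a) (bernoulli_pmf b)) x *\<^sub>R exp (of_bool (fst x \<and> snd x)))"
    by (rule integral_measure_pmf) auto
  also have "\<dots> = 1 + (exp 1 - 1) * a * b"
    unfolding U using assms by (simp add: pmf_pair algebra_simps)
  finally show ?thesis .
qed

lemma exp_bound_le: "1 + (exp 1 - 1) * x \<le> exp (2 * (x::real))" if "0 \<le> x" for x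
proof -
  have "exp 1 - 1 \<le> (2::real)" using exp_le by simp
  hence "1 + (exp 1 - 1) * x \<le> 1 + 2 * x" using that by (simp add: mult_right_mono)
  also have "\<dots> \<le> exp (2 * x)" by (rule exp_ge_add_one_self)
  finally show ?thesis .
qed

lemma col_tail:
  fixes n j :: nat and P Pimat :: "nat \<Rightarrow> nat \<Rightarrow> real" and beta tau :: real
  assumes j: "j < n"
    and Pb: "\<forall>i<n. \<forall>j<n. 0 \<le> P i j \<and> P i j \<le> 1 \<and> P i j = P j i"
    and Qb: "\<forall>i<n. \<forall>j<n. 0 \<le> Pimat i j \<and> Pimat i j \<le> 1 \<and> Pimat i j = Pimat j i"
    and beta: "(\<Sum>i<n. P i j * Pimat i j) \<le> beta"
  shows "measure_pmf.prob (sample_pmf n P Pimat) {w. tau \<le> (\<Sum>i<n. sampO w i j * adjA w i j)}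
           \<le> exp (2 * beta - tau)"
proof -
  define pi where "pi i = (min i j, max i j)" for i
  define J where "J = {..<n} - {j}"
  define T where "T = pi ` J"
  define h where "h x = (of_bool (fst x \<and> snd x) :: real)" for x :: "bool \<times> bool"
  define f where "f p x = (if p \<in> T then exp (h x) else 1)" for p x
  define U where "U = upper_pairs n"
  define Q where "Q = (\<lambda>(i,j). pair_pmf (bernoulli_pmf (P i j)) (bernoulli_pmf (Pimat i j)))"
  define M where "M = sample_pmf n P Pimat"
  have M: "M = Pi_pmf U (False, False) Q" unfolding M_def sample_pmf_def U_def Q_def ..
  have finU: "finite U"
  proof -
    have "U \<subseteq> {..<n} \<times> {..<n}" unfolding U_def upper_pairs_def by auto
    thus ?thesis by (rule finite_subset) auto
  qed
  have finJ: "finite J" unfolding J_def by auto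
  have inj: "inj_on pi J" unfolding pi_def inj_on_def J_def by (auto simp: min_def max_def split: if_splits)
  have TU: "T \<subseteq> U" unfolding T_def U_def J_def pi_def upper_pairs_def using j by (auto simp: min_def max_def)
  have UT: "U \<inter> T = T" using TU by blast
  have trm: "sampO w i j * adjA w i j = (if i = j then 0 else h (w (pi i)))" for w i
    unfolding sampO_def adjA_def sym_of_def pi_def h_def by (auto simp: min_def max_def)
  define D where "D w = (\<Sum>i<n. sampO w i j * adjA w i j)" for w
  define u where "u w = (\<Prod>p\<in>U. f p (w p))" for w
  have D: "D w = (\<Sum>i\<in>J. h (w (pi i)))" for w
  proof -
    have "D w = (\<Sum>i<n. (if i = j then 0 else h (w (pi i))))" unfolding D_def trm ..
    also have "\<dots> = (\<Sum>i\<in>J. (if i = j then 0 else h (w (pi i))))"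
      unfolding J_def using j by (subst sum.remove[of "{..<n}" j]) auto
    also have "\<dots> = (\<Sum>i\<in>J. h (w (pi i)))" unfolding J_def by (intro sum.cong) auto
    finally show ?thesis .
  qed
  have Eu: "exp (D w) = u w" for w
  proof -
    have "exp (D w) = (\<Prod>i\<in>J. exp (h (w (pi i))))" unfolding D using finJ by (simp add: exp_sum)
    also have "\<dots> = (\<Prod>p\<in>T. exp (h (w p)))" unfolding T_def using inj by (simp add: prod.reindex)
    also have "\<dots> = (\<Prod>p\<in>U. f p (w p))"
      unfolding f_def by (simp only: prod.inter_restrict[OF finU, symmetric] UT)
    finally show ?thesis unfolding u_def .
  qed
  have intQ: "integrable (measure_pmf (Q p)) (f p)" for p
    by (rule integrable_measure_pmf_finite) (rule finite_subset[of _ UNIV], auto)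
  have Eprod: "measure_pmf.expectation M u = (\<Prod>p\<in>U. measure_pmf.expectation (Q p) (f p))"
    unfolding M u_def by (rule expectation_prod_Pi_pmf[OF finU intQ]) (auto simp: f_def)
  have factor: "measure_pmf.expectation (Q p) (f p) \<le> exp (2 * (if p \<in> T then P (fst p) (snd p) * Pimat (fst p) (snd p) else 0))"
    if p: "p \<in> U" for p
  proof (cases "p \<in> T")
    case True
    obtain a b where ab: "p = (a,b)" "a < n" "b < n" using p unfolding U_def upper_pairs_def by auto
    have "measure_pmf.expectation (Q p) (f p) = 1 + (exp 1 - 1) * P a b * Pimat a b"
      unfolding ab(1) Q_def f_def h_def using True ab Pb Qb by (simp add: bern_exp)
    also have "\<dots> \<le> exp (2 * (P a b * Pimat a b))"
      using exp_bound_le[of "P a b * Pimat a b"] ab Pb Qb by (simp add: mult.assoc)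
    finally show ?thesis using True ab by simp
  next
    case False
    thus ?thesis unfolding f_def by simp
  qed
  have "measure_pmf.expectation M u \<le> (\<Prod>p\<in>U. exp (2 * (if p \<in> T then P (fst p) (snd p) * Pimat (fst p) (snd p) else 0)))"
    unfolding Eprod
  proof (rule prod_mono)
    fix p assume "p \<in> U"
    show "0 \<le> measure_pmf.expectation (Q p) (f p) \<and> measure_pmf.expectation (Q p) (f p) \<le> exp (2 * (if p \<in> T then P (fst p) (snd p) * Pimat (fst p) (snd p) else 0))"
      using factor[OF \<open>p \<in> U\<close>] by (auto simp: f_def intro!: Bochner_Integration.integral_nonneg)
  qed
  also have "\<dots> = exp (2 * (\<Sum>p\<in>U. (if p \<in> T then P (fst p) (snd p) * Pimat (fst p) (snd p) else 0)))"
    using finU by (simp add: exp_sum sum_distrib_left)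
  also have "(\<Sum>p\<in>U. (if p \<in> T then P (fst p) (snd p) * Pimat (fst p) (snd p) else 0)) =
      (\<Sum>p\<in>T. P (fst p) (snd p) * Pimat (fst p) (snd p))"
    by (simp only: sum.inter_restrict[OF finU, symmetric] UT)
  also have "\<dots> = (\<Sum>i\<in>J. P i j * Pimat i j)"
  proof -
    have "(\<Sum>p\<in>T. P (fst p) (snd p) * Pimat (fst p) (snd p)) = (\<Sum>i\<in>J. P (fst (pi i)) (snd (pi i)) * Pimat (fst (pi i)) (snd (pi i)))"
      unfolding T_def using inj by (simp add: sum.reindex)
    also have "\<dots> = (\<Sum>i\<in>J. P i j * Pimat i j)"
    proof (intro sum.cong refl)
      fix i assume "i \<in> J"
      hence "i < n" unfolding J_def by auto
      thus "P (fst (pi i)) (snd (pi i)) * Pimat (fst (pi i)) (snd (pi i)) = P i j * Pimat i j"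
        using Pb Qb j unfolding pi_def by (cases "i \<le> j") (auto simp: min_def max_def)
    qed
    finally show ?thesis .
  qed
  also have "(\<Sum>i\<in>J. P i j * Pimat i j) \<le> (\<Sum>i<n. P i j * Pimat i j)"
    unfolding J_def using Pb Qb j by (intro sum_mono2) (auto intro!: mult_nonneg_nonneg)
  finally have Eb: "measure_pmf.expectation M u \<le> exp (2 * beta)"
    using beta by (smt (verit) exp_le_cancel_iff)
  have intu: "integrable M u"
    unfolding M u_def by (rule integrable_prod_Pi_pmf[OF finU intQ])
  have upos: "\<forall>w. 0 \<le> u w" using Eu by (metis exp_ge_zero)
  have "measure_pmf.prob M {w. tau \<le> D w} = measure_pmf.prob M {w \<in> space (measure_pmf M). exp tau \<le> u w}"
    by (simp flip: Eu)
  also have "\<dots> \<le> measure_pmf.expectation M u / exp tau"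
    by (rule integral_Markov_inequality_measure[OF intu]) (auto simp: upos)
  also have "\<dots> \<le> exp (2 * beta) / exp tau"
    by (rule divide_right_mono[OF Eb]) simp
  also have "\<dots> = exp (2 * beta - tau)" by (simp add: exp_diff)
  finally show ?thesis unfolding M_def D_def .
qed



lemma main:
  fixes n :: nat and Inl :: "nat set" and k :: nat and rho gam mu nu nut lam1 lam2 :: real
    and Lstar Sstar Pimat :: "nat \<Rightarrow> nat \<Rightarrow> real"
  assumes n2: "n \<ge> 2" and Inl: "Inl \<subseteq> {..<n}"
    and rho: "0 < rho" and gam: "0 < gam"
    and Lst: "\<forall>i<n. \<forall>j<n. Lstar i j = Lstar j i \<and> 0 \<le> Lstar i j \<and> Lstar i j \<le> rho"
    and Lout: "\<forall>i<n. \<forall>j<n. (i \<in> {..<n} - Inl \<or> j \<in> {..<n} - Inl) \<longrightarrow> Lstar i j = 0"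
    and Sst: "\<forall>i<n. \<forall>j<n. 0 \<le> Sstar i j \<and> Sstar i j \<le> gam"
    and Sinl: "\<forall>i<n. \<forall>j\<in>Inl. Sstar i j = 0"
    and Pb: "\<forall>i<n. \<forall>j<n. 0 \<le> Lstar i j + Sstar i j + Sstar j i \<and> Lstar i j + Sstar i j + Sstar j i \<le> 1"
    and Pim: "\<forall>i<n. \<forall>j<n. Pimat i j = Pimat j i \<and> 0 \<le> Pimat i j \<and> Pimat i j \<le> 1"
    and nu: "0 < nu" and nut: "0 < nut"
    and A1a: "\<forall>i\<in>Inl. (\<Sum>j\<in>Inl. Pimat i j) \<le> nu * real n"
    and A1b: "\<forall>i<n. (\<Sum>j\<in>{..<n} - Inl. Pimat i j) \<le> nut * real (card ({..<n} - Inl))"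
    and A2: "nu * rho \<ge> ln (real n) / real n"
    and A3: "nu * rho * real n \<ge> nut * gam * real (card ({..<n} - Inl))"
    and lam2: "lam2 = 19 * sqrt (nu * rho * real n)"
  shows "measure_pmf.prob (sample_pmf n (\<lambda>i j. Lstar i j + Sstar i j + Sstar j i) Pimat)
       {w. \<forall>Sh Lh. is_estimator n rho (sampO w) (adjA w) lam1 lam2 Sh Lh \<longrightarrow>
              (\<forall>j\<in>Inl. \<forall>i<n. Sh i j = 0)}
       \<ge> 1 - 1 / real n"
proof -
  define P where "P = (\<lambda>i j. Lstar i j + Sstar i j + Sstar j i)"
  define Out where "Out = {..<n} - Inl"
  define m where "m = nu * rho * real n"
  define M where "M = sample_pmf n P Pimat"
  define D where "D w j = (\<Sum>i<n. sampO w i j * adjA w i j)" for w j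
  define B where "B j = {w. 90 * m \<le> D w j}" for j
  have npos: "real n > 0" using n2 by simp
  have mpos: "m > 0" unfolding m_def using nu rho npos by simp
  have lnm: "ln (real n) \<le> m"
  proof -
    have "ln (real n) / real n * real n \<le> nu * rho * real n"
      using A2 npos by (intro mult_right_mono) auto
    thus ?thesis unfolding m_def using npos by simp
  qed
  have lnpos: "ln (real n) \<ge> 0" using n2 by simp
  have lam2sq: "lam2^2 = 361 * m" unfolding lam2 m_def using nu rho npos
    by (simp add: power_mult_distrib)
  have lam2pos: "lam2 > 0" unfolding lam2 using nu rho npos by simp
  have finInl: "finite Inl" using Inl finite_subset by blast
  have cardInl: "card Inl \<le> n" using card_mono[OF _ Inl] by simp
  have degbound: "(\<Sum>i<n. P i j * Pimat i j) \<le> 2 * m" if j: "j \<in> Inl" for j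
  proof -
    have jn: "j < n" using j Inl by auto
    have split: "{..<n} = Inl \<union> Out" "Inl \<inter> Out = {}" unfolding Out_def using Inl by auto
    have finOut: "finite Out" unfolding Out_def by auto
    have "(\<Sum>i<n. P i j * Pimat i j) = (\<Sum>i\<in>Inl. P i j * Pimat i j) + (\<Sum>i\<in>Out. P i j * Pimat i j)"
      unfolding split(1) using finInl finOut split(2) by (rule sum.union_disjoint)
    also have "(\<Sum>i\<in>Inl. P i j * Pimat i j) \<le> (\<Sum>i\<in>Inl. rho * Pimat j i)"
    proof (rule sum_mono)
      fix i assume i: "i \<in> Inl"
      have in_: "i < n" using i Inl by auto
      have "P i j = Lstar i j" unfolding P_def using Sinl i j in_ jn by auto
      hence "P i j \<le> rho" using Lst in_ jn by auto
      moreover have "0 \<le> Pimat i j" "Pimat i j = Pimat j i" using Pim in_ jn by auto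
      ultimately show "P i j * Pimat i j \<le> rho * Pimat j i" by (metis mult_right_mono)
    qed
    also have "(\<Sum>i\<in>Inl. rho * Pimat j i) \<le> rho * (nu * real n)"
      using A1a j rho by (simp add: sum_distrib_left[symmetric])
    also have "(\<Sum>i\<in>Out. P i j * Pimat i j) \<le> (\<Sum>i\<in>Out. gam * Pimat j i)"
    proof (rule sum_mono)
      fix i assume i: "i \<in> Out"
      have in_: "i < n" using i unfolding Out_def by auto
      have "P i j = Sstar j i" unfolding P_def using Sinl Lout i j in_ jn unfolding Out_def by auto
      hence "P i j \<le> gam" using Sst in_ jn by auto
      moreover have "0 \<le> Pimat i j" "Pimat i j = Pimat j i" using Pim in_ jn by auto
      ultimately show "P i j * Pimat i j \<le> gam * Pimat j i" by (metis mult_right_mono)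
    qed
    also have "(\<Sum>i\<in>Out. gam * Pimat j i) \<le> gam * (nut * real (card Out))"
      using A1b jn gam unfolding Out_def by (simp add: sum_distrib_left[symmetric])
    finally show ?thesis using A3 unfolding m_def Out_def by (simp add: algebra_simps)
  qed
  have tail: "measure_pmf.prob M (B j) \<le> 1 / (real n)^2" if j: "j \<in> Inl" for j
  proof -
    have jn: "j < n" using j Inl by auto
    have PbS: "\<forall>i<n. \<forall>j<n. 0 \<le> P i j \<and> P i j \<le> 1 \<and> P i j = P j i"
      using Pb Lst unfolding P_def by auto
    have PimS: "\<forall>i<n. \<forall>j<n. 0 \<le> Pimat i j \<and> Pimat i j \<le> 1 \<and> Pimat i j = Pimat j i"
      using Pim by auto
    have "measure_pmf.prob M (B j) \<le> exp (2 * (2 * m) - 90 * m)"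
      unfolding M_def B_def D_def by (rule col_tail[OF jn PbS PimS degbound[OF j]])
    also have "\<dots> \<le> exp (- (2 * ln (real n)))"
      using lnm lnpos mpos by (subst exp_le_cancel_iff) linarith
    also have "\<dots> = 1 / (real n)^2"
    proof -
      have "exp (2 * ln (real n)) = exp (ln (real n) + ln (real n))" by (simp only: mult_2)
      also have "\<dots> = exp (ln (real n)) * exp (ln (real n))" by (rule exp_add)
      also have "\<dots> = (real n)^2" using npos by (simp only: exp_ln power2_eq_square)
      finally have e: "exp (2 * ln (real n)) = (real n)^2" .
      show ?thesis unfolding exp_minus e by (simp add: divide_inverse)
    qed
    finally show ?thesis .
  qed
  have unionb: "measure_pmf.prob M (\<Union>j\<in>Inl. B j) \<le> 1 / real n"
  proof -
    have "measure_pmf.prob M (\<Union>j\<in>Inl. B j) \<le> (\<Sum>j\<in>Inl. measure_pmf.prob M (B j))"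
      by (rule measure_pmf.finite_measure_subadditive_finite[OF finInl]) auto
    also have "\<dots> \<le> (\<Sum>j\<in>Inl. 1 / (real n)^2)" by (rule sum_mono) (rule tail)
    also have "\<dots> = real (card Inl) / (real n)^2" by simp
    also have "\<dots> \<le> real n / (real n)^2" using cardInl npos by (simp add: divide_right_mono)
    also have "\<dots> = 1 / real n" by (simp add: power2_eq_square)
    finally show ?thesis .
  qed
  have good: "UNIV - (\<Union>j\<in>Inl. B j) \<subseteq>
       {w. \<forall>Sh Lh. is_estimator n rho (sampO w) (adjA w) lam1 lam2 Sh Lh \<longrightarrow>
              (\<forall>j\<in>Inl. \<forall>i<n. Sh i j = 0)}"
  proof (safe)
    fix w Sh Lh j i
    assume nb: "w \<notin> (\<Union>j\<in>Inl. B j)" and est: "is_estimator n rho (sampO w) (adjA w) lam1 lam2 Sh Lh"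
      and j: "j \<in> Inl" and i: "i < n"
    have jn: "j < n" using j Inl by auto
    have "D w j < 90 * m" using nb j unfolding B_def by auto
    hence deg: "4 * (\<Sum>i<n. sampO w i j * adjA w i j) < lam2^2"
      unfolding lam2sq D_def using mpos by simp
    show "Sh i j = 0"
    proof (rule det_col_zero[OF est _ _ _ _ _ jn lam2pos deg i])
      show "\<forall>i<n. \<forall>j<n. sampO w i j \<in> {0, 1}" unfolding sampO_def sym_of_def by auto
      show "\<forall>i<n. \<forall>j<n. adjA w i j \<in> {0, 1}" unfolding adjA_def sym_of_def by auto
      show "\<forall>i<n. \<forall>j<n. sampO w i j = sampO w j i" unfolding sampO_def sym_of_def by auto
      show "\<forall>i<n. \<forall>j<n. adjA w i j = adjA w j i" unfolding adjA_def sym_of_def by auto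
      show "\<forall>i<n. sampO w i i = 0" unfolding sampO_def sym_of_def by auto
    qed
  qed
  have "1 - 1 / real n \<le> 1 - measure_pmf.prob M (\<Union>j\<in>Inl. B j)" using unionb by simp
  also have "\<dots> = measure_pmf.prob M (UNIV - (\<Union>j\<in>Inl. B j))"
    using measure_pmf.prob_compl[of "\<Union>j\<in>Inl. B j" M] by simp
  also have "\<dots> \<le> measure_pmf.prob M {w. \<forall>Sh Lh. is_estimator n rho (sampO w) (adjA w) lam1 lam2 Sh Lh \<longrightarrow>
              (\<forall>j\<in>Inl. \<forall>i<n. Sh i j = 0)}"
    by (rule measure_pmf.finite_measure_mono[OF good]) simp
  finally show ?thesis unfolding M_def P_def .
qed

theorem theorem2:
  shows "\<exists>c::real. c > 0 \<and>
    (\<forall>(n::nat) (Inl::nat set) (k::nat) (rho::real) (gam::real) (mu::real) (nu::real) (nut::real)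
       (Lstar::nat \<Rightarrow> nat \<Rightarrow> real) (Sstar::nat \<Rightarrow> nat \<Rightarrow> real) (Pimat::nat \<Rightarrow> nat \<Rightarrow> real)
       (lam1::real) (lam2::real).
     let Out = {..<n} - Inl; s = card Out;
         P = (\<lambda>i j. Lstar i j + Sstar i j + Sstar j i) in
     n \<ge> 2 \<and> Inl \<subseteq> {..<n} \<and>
     0 < rho \<and> rho \<le> 1/2 \<and> 0 < gam \<and> gam \<le> 1 \<and> k \<ge> 1 \<and>
     \<comment> \<open>L*: symmetric, rank k, entries in [0,rho], vanishing on outlier rows/columns\<close>
     (\<forall>i<n. \<forall>j<n. Lstar i j = Lstar j i \<and> 0 \<le> Lstar i j \<and> Lstar i j \<le> rho) \<and>
     mrank n Lstar = k \<and>
     (\<forall>i<n. \<forall>j<n. (i \<in> Out \<or> j \<in> Out) \<longrightarrow> Lstar i j = 0) \<and>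
     \<comment> \<open>S*: entries in [0,gam], zero diagonal, zero inlier columns\<close>
     (\<forall>i<n. \<forall>j<n. 0 \<le> Sstar i j \<and> Sstar i j \<le> gam) \<and>
     (\<forall>i<n. Sstar i i = 0) \<and>
     (\<forall>i<n. \<forall>j\<in>Inl. Sstar i j = 0) \<and>
     (\<forall>i<n. \<forall>j<n. 0 \<le> P i j \<and> P i j \<le> 1) \<and>
     \<comment> \<open>Pimat = E[Omega]: symmetric, zero diagonal, entries in [0,1]\<close>
     (\<forall>i<n. \<forall>j<n. Pimat i j = Pimat j i \<and> 0 \<le> Pimat i j \<and> Pimat i j \<le> 1) \<and>
     (\<forall>i<n. Pimat i i = 0) \<and>
     \<comment> \<open>Assumption 1\<close>
     mu > 0 \<and> (\<forall>i\<in>Inl. \<forall>j\<in>Inl. i \<noteq> j \<longrightarrow> Pimat i j \<ge> mu) \<and>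
     0 < nu \<and> nu \<le> 1 \<and> 0 < nut \<and> nut \<le> 1 \<and>
     (\<forall>i\<in>Inl. (\<Sum>j\<in>Inl. Pimat i j) \<le> nu * real n) \<and>
     (\<forall>i<n. (\<Sum>j\<in>Out. Pimat i j) \<le> nut * real s) \<and>
     \<comment> \<open>Assumption 2\<close>
     nu * rho \<ge> ln (real n) / real n \<and> nut * gam \<ge> ln (real n) / real n \<and>
     \<comment> \<open>Assumption 3\<close>
     nu * rho * real n \<ge> nut * gam * real s \<and>
     lam1 > 0 \<and> lam2 = 19 * sqrt (nu * rho * real n)
     \<longrightarrow>
     measure_pmf.prob (sample_pmf n P Pimat)
       {w. \<forall>Sh Lh. is_estimator n rho (sampO w) (adjA w) lam1 lam2 Sh Lh \<longrightarrow>
              (\<forall>j\<in>Inl. \<forall>i<n. Sh i j = 0)}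
       \<ge> 1 - c / real n)"
  apply (rule exI[of _ "1::real"])
  apply (intro conjI allI)
   apply simp
  apply (unfold Let_def)
  apply (intro impI)
  apply (elim conjE)
  subgoal for n Inl k rho gam mu nu nut Lstar Sstar Pimat lam1 lam2
    by (rule main[where n=n and Inl=Inl and rho=rho and gam=gam and Lstar=Lstar and Sstar=Sstar
          and Pimat=Pimat and nu=nu and nut=nut]) assumption+
  done

end
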